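(* Let $F$ be a Banach lattice, $E$ a Banach space and $T\in\mathcal{L}(F,E)$. (i) If $T$ is DNS, then $T$ is weakly DNS. (ii) If $T$ is strongly DNS, then $T$ is strictly DNS.
   Context: $\mathrm{S}_F$ is the unit sphere; $x,y$ disjoint means $|x|\wedge|y|=0$. $T$ is DNS if there is no disjoint $(f_n)\subset\mathrm{S}_F$ with $\|Tf_n\|\to0$; strictly DNS if there is $\delta>0$ such that no disjoint $(f_n)\subset\mathrm{S}_F$ satisfies $\|Tf_n\|\le\delta$ for all $n$. The un-topology on $F$ has zero neighborhood base $\{f:\||f|\wedge h\|<\varepsilon\}$, $h\in F_+$, $\varepsilon>0$; the una-topology is defined the same way with $h$ in the positive part of the ideal $F^a$ of order continuous elements of $F$. $T$ is weakly (resp. strongly) DNS if there is no net $(f_i)\subset\mathrm{S}_F$ that is un-null (resp. una-null) and satisfies $\|Tf_i\|\to0$. *)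

theory Defs
  imports "HOL-Analysis.Analysis"
begin

definition babs :: "'a::{uminus,sup} \<Rightarrow> 'a" where
  "babs x = sup x (- x)"

class banach_lattice = banach + ordered_real_vector + lattice +
  assumes lattice_norm: "sup x (- x) \<le> sup y (- y) \<Longrightarrow> norm x \<le> norm y"

definition bdisjoint :: "'a::banach_lattice \<Rightarrow> 'a \<Rightarrow> bool" where
  "bdisjoint x y \<longleftrightarrow> inf (babs x) (babs y) = 0"

text \<open>Order continuous elements: x is order continuous iff every decreasing net
  in [0,|x|] with infimum 0 is norm null.  The range of a decreasing net is a
  downward directed set, so we phrase it with downward directed sets D.\<close>
definition order_continuous_elem :: "'a::banach_lattice \<Rightarrow> bool" where
  "order_continuous_elem x \<longleftrightarrow>
     (\<forall>D. D \<noteq> {} \<and> D \<subseteq> {0..babs x}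
        \<and> (\<forall>a\<in>D. \<forall>b\<in>D. \<exists>c\<in>D. c \<le> a \<and> c \<le> b)
        \<and> (\<forall>l. (\<forall>d\<in>D. l \<le> d) \<longrightarrow> l \<le> 0)
        \<longrightarrow> (\<forall>\<epsilon>>0. \<exists>d\<in>D. norm d < \<epsilon>))"

text \<open>Nets are represented by a function together with a proper filter on the
  index type (a directed index set gives the filter at_top).\<close>

definition un_null :: "('i \<Rightarrow> 'a::banach_lattice) \<Rightarrow> 'i filter \<Rightarrow> bool" where
  "un_null f D \<longleftrightarrow>
     (\<forall>h. 0 \<le> h \<longrightarrow> ((\<lambda>i. norm (inf (babs (f i)) h)) \<longlongrightarrow> 0) D)"

definition una_null :: "('i \<Rightarrow> 'a::banach_lattice) \<Rightarrow> 'i filter \<Rightarrow> bool" where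
  "una_null f D \<longleftrightarrow>
     (\<forall>h. 0 \<le> h \<and> order_continuous_elem h \<longrightarrow>
          ((\<lambda>i. norm (inf (babs (f i)) h)) \<longlongrightarrow> 0) D)"

definition DNS :: "('a::banach_lattice \<Rightarrow> 'b::real_normed_vector) \<Rightarrow> bool" where
  "DNS T \<longleftrightarrow> \<not> (\<exists>f::nat \<Rightarrow> 'a. (\<forall>n. norm (f n) = 1)
        \<and> (\<forall>m n. m \<noteq> n \<longrightarrow> bdisjoint (f m) (f n))
        \<and> (\<lambda>n. norm (T (f n))) \<longlonglongrightarrow> 0)"

definition strictly_DNS :: "('a::banach_lattice \<Rightarrow> 'b::real_normed_vector) \<Rightarrow> bool" where
  "strictly_DNS T \<longleftrightarrow> (\<exists>\<delta>>0. \<not> (\<exists>f::nat \<Rightarrow> 'a. (\<forall>n. norm (f n) = 1)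
        \<and> (\<forall>m n. m \<noteq> n \<longrightarrow> bdisjoint (f m) (f n))
        \<and> (\<forall>n. norm (T (f n)) \<le> \<delta>)))"

text \<open>For the net notions, the index type is taken to be the type of F itself:
  any net (f_i) along a proper filter induces the image filter on F, so this
  loses no generality.\<close>
definition weakly_DNS :: "('a::banach_lattice \<Rightarrow> 'b::real_normed_vector) \<Rightarrow> bool" where
  "weakly_DNS T \<longleftrightarrow> \<not> (\<exists>(f::'a \<Rightarrow> 'a) (D::'a filter). D \<noteq> bot
        \<and> (\<forall>i. norm (f i) = 1) \<and> un_null f D
        \<and> ((\<lambda>i. norm (T (f i))) \<longlongrightarrow> 0) D)"

definition strongly_DNS :: "('a::banach_lattice \<Rightarrow> 'b::real_normed_vector) \<Rightarrow> bool" where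
  "strongly_DNS T \<longleftrightarrow> \<not> (\<exists>(f::'a \<Rightarrow> 'a) (D::'a filter). D \<noteq> bot
        \<and> (\<forall>i. norm (f i) = 1) \<and> una_null f D
        \<and> ((\<lambda>i. norm (T (f i))) \<longlongrightarrow> 0) D)"

end

theory Submission
  imports Defs "HOL-Library.Lattice_Algebras"
begin



subclass (in banach_lattice) lattice_ab_group_add ..

lemma babs_nonneg: "0 \<le> babs (x::'a::banach_lattice)"
proof -
  have "0 \<le> sup x (-x) + sup x (-x)"
    by (metis add.right_inverse add_mono sup_ge1 sup_ge2 add.commute)
  thus ?thesis unfolding babs_def by simp
qed

lemma babs_pos: "0 \<le> (x::'a::banach_lattice) \<Longrightarrow> babs x = x"
  unfolding babs_def by (simp add: sup_absorb1 order_trans[of "-x" 0 x])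

lemma norm_babs: "norm (babs (x::'a::banach_lattice)) = norm x"
proof -
  have "babs (babs x) = babs x" by (rule babs_pos[OF babs_nonneg])
  hence "sup (babs x) (- babs x) = sup x (-x)" by (simp add: babs_def)
  thus ?thesis using lattice_norm[of "babs x" x] lattice_norm[of x "babs x"] by simp
qed

lemma norm_mono_pos: "0 \<le> (x::'a::banach_lattice) \<Longrightarrow> x \<le> y \<Longrightarrow> norm x \<le> norm y"
  using lattice_norm[of x y] babs_pos[of x] babs_pos[of y] unfolding babs_def by auto

lemma scaleR_sup: "0 < (c::real) \<Longrightarrow> c *\<^sub>R sup x y = sup (c *\<^sub>R x) (c *\<^sub>R (y::'a::banach_lattice))"
proof -
  assume c: "0 < c"
  hence c0: "0 \<le> c" "0 \<le> 1/c" by simp_all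
  let ?S = "sup (c *\<^sub>R x) (c *\<^sub>R y)"
  have 1: "?S \<le> c *\<^sub>R sup x y"
    by (rule sup_least; rule scaleR_left_mono[OF _ c0(1)]; rule sup_ge1 sup_ge2)
  have "(1/c) *\<^sub>R (c *\<^sub>R x) \<le> (1/c) *\<^sub>R ?S" by (rule scaleR_left_mono[OF sup_ge1 c0(2)])
  hence "x \<le> (1/c) *\<^sub>R ?S" using c by simp
  moreover have "(1/c) *\<^sub>R (c *\<^sub>R y) \<le> (1/c) *\<^sub>R ?S" by (rule scaleR_left_mono[OF sup_ge2 c0(2)])
  hence "y \<le> (1/c) *\<^sub>R ?S" using c by simp
  ultimately have "sup x y \<le> (1/c) *\<^sub>R ?S" by (rule sup_least)
  hence "c *\<^sub>R sup x y \<le> c *\<^sub>R ((1/c) *\<^sub>R ?S)"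
    by (rule scaleR_left_mono[OF _ c0(1)])
  moreover have "c *\<^sub>R ((1/c) *\<^sub>R ?S) = ?S" using c by simp
  ultimately have "c *\<^sub>R sup x y \<le> ?S" by simp
  thus ?thesis using 1 by (rule antisym)
qed

lemma scaleR_inf: "0 < (c::real) \<Longrightarrow> c *\<^sub>R inf x y = inf (c *\<^sub>R x) (c *\<^sub>R (y::'a::banach_lattice))"
proof -
  assume c: "0 < c"
  have "c *\<^sub>R inf x y = c *\<^sub>R (- sup (-x) (-y))" by (simp only: inf_eq_neg_sup)
  also have "\<dots> = - (c *\<^sub>R sup (-x) (-y))" by (rule scaleR_minus_right)
  also have "\<dots> = - sup (c *\<^sub>R (-x)) (c *\<^sub>R (-y))" using scaleR_sup[OF c, of "-x" "-y"] by (rule arg_cong)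
  also have "\<dots> = - sup (- (c *\<^sub>R x)) (- (c *\<^sub>R y))" by (simp only: scaleR_minus_right)
  also have "\<dots> = inf (c *\<^sub>R x) (c *\<^sub>R y)" by (rule inf_eq_neg_sup[symmetric])
  finally show ?thesis .
qed

lemma babs_scaleR: "0 < (c::real) \<Longrightarrow> babs (c *\<^sub>R x) = c *\<^sub>R babs (x::'a::banach_lattice)"
  unfolding babs_def using scaleR_sup[of c x "-x"] by simp

lemma pos_neg_disj: "inf (sup (x::'a::banach_lattice) 0) (sup (-x) 0) = 0"
proof -
  have "sup x 0 + (-x) = sup (x + -x) (0 + -x)" by (rule add_sup_distrib_right)
  hence "sup (-x) 0 = sup x 0 - x" by (simp add: sup_commute)
  hence e1: "inf (sup x 0) (sup (-x) 0) = sup x 0 + inf 0 (-x)"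
    by (simp add: add_inf_distrib_left)
  have e2: "inf 0 (-x) = - sup x 0" by (simp add: neg_sup_eq_inf sup_commute)
  have e3: "sup x 0 + inf 0 (-x) = sup x 0 + - sup x 0" using e2 by (rule arg_cong)
  have e4: "sup x 0 + - sup x 0 = 0" by (rule add.right_inverse)
  show ?thesis by (simp only: e1 e3 e4)
qed

lemma diff_pprt: "a - sup (a - s) 0 = inf s (a::'a::banach_lattice)"
proof -
  have "a - sup (a - s) 0 = a + inf (-(a-s)) (-0)" by (rule diff_sup_eq_inf)
  also have "\<dots> = inf (a + -(a-s)) (a + -0)" by (rule add_inf_distrib_left)
  finally show ?thesis by simp
qed

lemma pos_minus_neg: "sup x 0 - sup (-x) 0 = (x::'a::banach_lattice)"
proof -
  have e1: "x = sup x 0 + inf x 0" using add_eq_inf_sup[of x 0] by (simp only: add_0_right)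
  have e2: "inf x 0 = - sup (-x) 0" using inf_eq_neg_sup[of x 0] by (simp only: minus_zero)
  have "sup x 0 - sup (-x) 0 = sup x 0 + inf x 0" by (simp only: e2 diff_conv_add_uminus)
  thus ?thesis using e1 by (rule trans[OF _ sym])
qed

lemma inf_add_le: "0 \<le> c \<Longrightarrow> inf a (b + c) \<le> inf a b + (c::'a::banach_lattice)"
proof -
  assume "0 \<le> c"
  hence "inf a (b + c) \<le> inf (a + c) (b + c)"
    by (meson add_increasing2 inf_mono order_refl)
  thus ?thesis by (rule ord_le_eq_trans[OF _ add_inf_distrib_right[symmetric]])
qed

lemma inf_sum_le: "0 \<le> y \<Longrightarrow> 0 \<le> a \<Longrightarrow> 0 \<le> b \<Longrightarrow>
  inf y (a + b) \<le> inf y a + inf y (b::'a::banach_lattice)"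
proof -
  assume h: "0 \<le> y" "0 \<le> a" "0 \<le> b"
  have "inf y a + inf y b = inf (y + inf y b) (a + inf y b)" by (rule add_inf_distrib_right)
  also have "\<dots> = inf (inf (y + y) (y + b)) (inf (a + y) (a + b))"
    by (simp only: add_inf_distrib_left)
  finally have e: "inf y a + inf y b = inf (inf (y + y) (y + b)) (inf (a + y) (a + b))" .
  have t1: "y \<le> y + y" by (rule add_increasing2[OF h(1) order_refl])
  have t2: "y \<le> y + b" by (rule add_increasing2[OF h(3) order_refl])
  have t3: "y \<le> a + y" by (rule add_increasing[OF h(2) order_refl])
  have "inf y (a + b) \<le> y + y" using order_trans[OF inf_le1 t1] .
  moreover have "inf y (a + b) \<le> y + b" using order_trans[OF inf_le1 t2] .
  moreover have "inf y (a + b) \<le> a + y" using order_trans[OF inf_le1 t3] .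
  moreover have "inf y (a + b) \<le> a + b" by (rule inf_le2)
  ultimately have X: "inf y (a + b) \<le> inf (inf (y + y) (y + b)) (inf (a + y) (a + b))"
    by (simp only: le_inf_iff)
  show ?thesis by (rule ord_le_eq_trans[OF X e[symmetric]])
qed

lemma disj_scale: "0 \<le> x \<Longrightarrow> 0 \<le> y \<Longrightarrow> 0 < (c::real) \<Longrightarrow> x \<le> c *\<^sub>R A \<Longrightarrow> y \<le> c *\<^sub>R B
  \<Longrightarrow> inf A B = 0 \<Longrightarrow> inf x (y::'a::banach_lattice) = 0"
proof -
  assume h: "0 \<le> x" "0 \<le> y" "0 < c" "x \<le> c *\<^sub>R A" "y \<le> c *\<^sub>R B" "inf A B = 0"
  have 1: "inf x y \<le> inf (c *\<^sub>R A) (c *\<^sub>R B)" by (rule inf_mono[OF h(4) h(5)])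
  have "inf (c *\<^sub>R A) (c *\<^sub>R B) = c *\<^sub>R inf A B" using scaleR_inf[OF h(3)] by (rule sym)
  also have "\<dots> = 0" using h(6) by simp
  finally have 2: "inf x y \<le> 0" using 1 by simp
  have 3: "0 \<le> inf x y" by (rule le_infI[OF h(1) h(2)])
  show ?thesis using 2 3 by (rule antisym)
qed

lemma closed_cone: "X \<longlonglongrightarrow> x \<Longrightarrow> (\<And>n. 0 \<le> X n) \<Longrightarrow> 0 \<le> (x::'a::banach_lattice)"
proof -
  assume L: "X \<longlonglongrightarrow> x" and P: "\<And>n. 0 \<le> X n"
  define m where "m = sup (-x) 0"
  have m0: "0 \<le> m" by (simp add: m_def)
  have "\<And>n. norm m \<le> norm (X n - x)"
  proof -
    fix n
    have "-x \<le> X n - x" using P[of n] by simp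
    also have "\<dots> \<le> babs (X n - x)" unfolding babs_def by simp
    finally have "m \<le> babs (X n - x)" unfolding m_def using babs_nonneg by simp
    thus "norm m \<le> norm (X n - x)" using norm_mono_pos[OF m0] norm_babs by metis
  qed
  moreover have "(\<lambda>n. norm (X n - x)) \<longlonglongrightarrow> 0"
    using L by (simp add: LIM_zero tendsto_norm_zero)
  ultimately have "norm m \<le> 0" by (metis LIMSEQ_le_const)
  hence "m = 0" by simp
  hence "-x \<le> 0" using sup_ge1[of "-x" 0] unfolding m_def by simp
  thus ?thesis by simp
qed




lemma archim_zero: "0 \<le> (a::real) \<Longrightarrow> (\<And>k::nat. real (Suc k) * a \<le> b) \<Longrightarrow> a = 0"
proof (rule ccontr)
  assume a: "0 \<le> a" "\<And>k::nat. real (Suc k) * a \<le> b" "a \<noteq> 0"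
  hence ap: "a > 0" by simp
  obtain k::nat where "b / a < real k" using reals_Archimedean2 by blast
  hence "b < real k * a" using ap by (simp add: divide_less_eq)
  also have "\<dots> \<le> real (Suc k) * a" using ap by simp
  finally show False using a(2)[of k] by simp
qed

lemma oc_incr_cauchy:
  fixes x :: "nat \<Rightarrow> 'a::banach_lattice"
  assumes oc: "order_continuous_elem h" and h0: "0 \<le> h"
    and inc: "\<And>n. x n \<le> x (Suc n)" and x0: "\<And>n. 0 \<le> x n" and xh: "\<And>n. x n \<le> h"
    and e: "\<epsilon> > 0"
  shows "\<exists>n. \<forall>m\<ge>n. norm (x m - x n) < \<epsilon>"
proof -
  have mono: "\<And>n m. n \<le> m \<Longrightarrow> x n \<le> x m" using inc by (rule lift_Suc_mono_le)
  define U where "U = {u. u \<le> h \<and> (\<forall>n. x n \<le> u)}"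
  define D where "D = {u - x n | u n. u \<in> U}"
  have hU: "h \<in> U" unfolding U_def using xh by simp
  have bh: "babs h = h" using babs_pos[OF h0] .
  have "D \<noteq> {}" using hU unfolding D_def by blast
  moreover have "D \<subseteq> {0..babs h}"
  proof
    fix d assume "d \<in> D"
    then obtain u n where d: "d = u - x n" "u \<in> U" unfolding D_def by blast
    have "0 \<le> d" using d unfolding U_def by simp
    moreover have "d \<le> h"
    proof -
      have "u - x n \<le> u" using x0[of n] by simp
      moreover have "u \<le> h" using d(2) unfolding U_def by simp
      ultimately show ?thesis using d(1) order_trans by blast
    qed
    ultimately show "d \<in> {0..babs h}" using bh by simp
  qed
  moreover have "\<forall>a\<in>D. \<forall>b\<in>D. \<exists>c\<in>D. c \<le> a \<and> c \<le> b"
  proof (intro ballI)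
    fix a b assume "a \<in> D" "b \<in> D"
    then obtain u n u' n' where ab: "a = u - x n" "u \<in> U" "b = u' - x n'" "u' \<in> U"
      unfolding D_def by blast
    have "inf u u' \<in> U" using ab unfolding U_def by (simp add: le_infI1)
    hence "inf u u' - x (max n n') \<in> D" unfolding D_def by blast
    moreover have "inf u u' - x (max n n') \<le> a"
      unfolding ab(1) by (rule diff_mono[OF inf_le1 mono]) simp
    moreover have "inf u u' - x (max n n') \<le> b"
      unfolding ab(3) by (rule diff_mono[OF inf_le2 mono]) simp
    ultimately show "\<exists>c\<in>D. c \<le> a \<and> c \<le> b" by blast
  qed
  moreover have "\<forall>l. (\<forall>d\<in>D. l \<le> d) \<longrightarrow> l \<le> 0"
  proof (intro allI impI)
    fix l assume lb: "\<forall>d\<in>D. l \<le> d"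
    define l' where "l' = sup l 0"
    have l'0: "0 \<le> l'" unfolding l'_def by simp
    have D0: "\<And>d. d \<in> D \<Longrightarrow> 0 \<le> d" unfolding D_def U_def by auto
    have lb': "\<And>d. d \<in> D \<Longrightarrow> l' \<le> d" using lb D0 unfolding l'_def by simp
    have step: "\<And>k::nat. h - real (Suc k) *\<^sub>R l' \<in> U"
    proof -
      fix k :: nat
      show "h - real (Suc k) *\<^sub>R l' \<in> U"
      proof (induction k)
        case 0
        have "\<And>n. l' \<le> h - x n" using lb' hU unfolding D_def by blast
        hence "\<And>n. x n \<le> h - l'" by (simp add: le_diff_eq add.commute)
        thus ?case unfolding U_def using l'0 by simp
      next
        case (Suc k)
        let ?u = "h - real (Suc k) *\<^sub>R l'"
        have "\<And>n. l' \<le> ?u - x n" using lb' Suc unfolding D_def by blast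
        hence xu: "\<And>n. x n \<le> ?u - l'" by (simp add: le_diff_eq add.commute)
        have e: "?u - l' = h - real (Suc (Suc k)) *\<^sub>R l'"
        proof -
          have r: "real (Suc (Suc k)) = real (Suc k) + 1" by simp
          have "real (Suc (Suc k)) *\<^sub>R l' = real (Suc k) *\<^sub>R l' + l'"
            by (simp only: r scaleR_add_left scaleR_one)
          thus ?thesis by (simp only: diff_diff_eq)
        qed
        have xu2: "\<forall>n. x n \<le> h - real (Suc (Suc k)) *\<^sub>R l'" using xu unfolding e by blast
        have "h - real (Suc (Suc k)) *\<^sub>R l' \<le> h"
        proof -
          have "0 \<le> real (Suc (Suc k)) *\<^sub>R l'" by (rule scaleR_nonneg_nonneg) (simp_all add: l'0)
          thus ?thesis by simp
        qed
        thus ?case unfolding U_def using xu2 by blast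
      qed
    qed
    have "\<And>k::nat. real (Suc k) * norm l' \<le> norm h"
    proof -
      fix k :: nat
      have "x 0 \<le> h - real (Suc k) *\<^sub>R l'" using step[of k] unfolding U_def by simp
      hence "0 \<le> h - real (Suc k) *\<^sub>R l'" using x0[of 0] by (rule order_trans[rotated])
      hence "real (Suc k) *\<^sub>R l' \<le> h" by simp
      moreover have "0 \<le> real (Suc k) *\<^sub>R l'" by (rule scaleR_nonneg_nonneg) (simp_all add: l'0)
      ultimately have "norm (real (Suc k) *\<^sub>R l') \<le> norm h" using norm_mono_pos by blast
      thus "real (Suc k) * norm l' \<le> norm h" by simp
    qed
    hence "norm l' = 0" by (rule archim_zero[rotated]) simp
    hence "l' = 0" by simp
    thus "l \<le> 0" using sup_ge1[of l 0] unfolding l'_def by simp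
  qed
  ultimately obtain d where d: "d \<in> D" "norm d < \<epsilon>"
    using oc e unfolding order_continuous_elem_def by blast
  then obtain u n where un: "d = u - x n" "u \<in> U" unfolding D_def by blast
  have "\<forall>m\<ge>n. norm (x m - x n) < \<epsilon>"
  proof (intro allI impI)
    fix m assume "n \<le> m"
    hence "0 \<le> x m - x n" using mono by simp
    moreover have "x m - x n \<le> d" using un unfolding U_def by (simp add: diff_right_mono)
    ultimately have "norm (x m - x n) \<le> norm d" by (rule norm_mono_pos)
    thus "norm (x m - x n) < \<epsilon>" using d by simp
  qed
  thus ?thesis by blast
qed




lemma oc_disjoint_null:
  fixes y :: "nat \<Rightarrow> 'a::banach_lattice"
  assumes oc: "order_continuous_elem h" and h0: "0 \<le> h"
    and y0: "\<And>n. 0 \<le> y n" and yh: "\<And>n. y n \<le> h"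
    and dj: "\<And>m n. m \<noteq> n \<Longrightarrow> inf (y m) (y n) = 0"
  shows "(\<lambda>n. norm (y n)) \<longlonglongrightarrow> 0"
proof -
  define x where "x n = (\<Sum>k<n. y k)" for n
  have x0: "\<And>n. 0 \<le> x n" unfolding x_def using y0 by (simp add: sum_nonneg)
  have xs: "\<And>n. x (Suc n) = x n + y n" unfolding x_def by simp
  have xd: "\<And>n m. n \<le> m \<Longrightarrow> inf (y m) (x n) = 0"
  proof -
    fix n
    show "\<And>m. n \<le> m \<Longrightarrow> inf (y m) (x n) = 0"
    proof (induction n)
      case 0 thus ?case using y0 by (simp add: x_def inf_absorb2)
    next
      case (Suc n)
      hence "inf (y m) (x n + y n) \<le> inf (y m) (x n) + inf (y m) (y n)"
        using inf_sum_le y0 x0 by blast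
      also have "\<dots> = 0" using Suc dj[of m n] by simp
      finally have "inf (y m) (x (Suc n)) \<le> 0" by (simp add: xs)
      moreover have "0 \<le> inf (y m) (x (Suc n))" using y0 x0 by simp
      ultimately show ?case by simp
    qed
  qed
  have xh: "\<And>n. x n \<le> h"
  proof -
    fix n show "x n \<le> h"
    proof (induction n)
      case 0 thus ?case using h0 by (simp add: x_def)
    next
      case (Suc n)
      have "x (Suc n) = x n + y n" by (rule xs)
      also have "\<dots> = sup (x n) (y n) + inf (x n) (y n)" by (rule add_eq_inf_sup)
      also have "inf (x n) (y n) = 0" using xd[of n n] by (simp add: inf_commute)
      finally show ?case using Suc yh[of n] by simp
    qed
  qed
  have inc: "\<And>n. x n \<le> x (Suc n)" using xs y0 by (simp add: add_increasing2)
  show ?thesis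
  proof (rule LIMSEQ_I)
    fix r :: real assume r: "0 < r"
    obtain n0 where n0: "\<forall>m\<ge>n0. norm (x m - x n0) < r/2"
      using oc_incr_cauchy[where x=x and h=h and \<epsilon>="r/2"] oc h0 inc x0 xh r by auto
    have "\<forall>n\<ge>n0. norm (norm (y n) - 0) < r"
    proof (intro allI impI)
      fix n assume n: "n0 \<le> n"
      have "y n = (x (Suc n) - x n0) - (x n - x n0)" using xs by simp
      hence "norm (y n) \<le> norm (x (Suc n) - x n0) + norm (x n - x n0)"
        by (metis norm_triangle_ineq4)
      also have "\<dots> < r"
      proof -
        have a: "norm (x (Suc n) - x n0) < r/2" using n0 n by simp
        have b: "norm (x n - x n0) < r/2" using n0 n by simp
        show ?thesis using a b by linarith
      qed
      finally show "norm (norm (y n) - 0) < r" by simp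
    qed
    thus "\<exists>no. \<forall>n\<ge>no. norm (norm (y n) - 0) < r" by blast
  qed
qed




definition limsupF :: "(nat \<Rightarrow> 'x filter) \<Rightarrow> 'x filter" where
  "limsupF F = Abs_filter (\<lambda>P. \<exists>M. \<forall>m\<ge>M. eventually P (F m))"

lemma eventually_limsupF:
  "eventually P (limsupF F) \<longleftrightarrow> (\<exists>M. \<forall>m\<ge>M. eventually P (F m))"
  unfolding limsupF_def
proof (rule eventually_Abs_filter, rule is_filter.intro)
  show "\<exists>M. \<forall>m\<ge>M. eventually (\<lambda>x. True) (F m)" by simp
next
  fix P Q
  assume "\<exists>M. \<forall>m\<ge>M. eventually P (F m)" "\<exists>M. \<forall>m\<ge>M. eventually Q (F m)"
  then obtain M1 M2 where "\<forall>m\<ge>M1. eventually P (F m)" "\<forall>m\<ge>M2. eventually Q (F m)" by blast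
  hence "\<forall>m\<ge>max M1 M2. eventually (\<lambda>x. P x \<and> Q x) (F m)" by (simp add: eventually_conj)
  thus "\<exists>M. \<forall>m\<ge>M. eventually (\<lambda>x. P x \<and> Q x) (F m)" by blast
next
  fix P Q
  assume "\<forall>x. P x \<longrightarrow> Q x" "\<exists>M. \<forall>m\<ge>M. eventually P (F m)"
  thus "\<exists>M. \<forall>m\<ge>M. eventually Q (F m)" by (meson eventually_mono)
qed

lemma part2:
  fixes T :: "'a::banach_lattice \<Rightarrow> 'b::real_normed_vector"
  assumes sd: "strongly_DNS T" shows "strictly_DNS T"
proof (rule ccontr)
  assume "\<not> strictly_DNS T"
  hence H: "\<And>\<delta>. \<delta> > 0 \<Longrightarrow> \<exists>f::nat\<Rightarrow>'a. (\<forall>n. norm (f n) = 1)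
        \<and> (\<forall>m n. m \<noteq> n \<longrightarrow> bdisjoint (f m) (f n)) \<and> (\<forall>n. norm (T (f n)) \<le> \<delta>)"
    unfolding strictly_DNS_def by blast
  have "\<forall>m::nat. \<exists>f::nat\<Rightarrow>'a. (\<forall>n. norm (f n) = 1)
        \<and> (\<forall>i j. i \<noteq> j \<longrightarrow> bdisjoint (f i) (f j)) \<and> (\<forall>n. norm (T (f n)) \<le> 1 / real (Suc m))"
    using H by simp
  from choice[OF this] obtain G :: "nat \<Rightarrow> nat \<Rightarrow> 'a" where G0: "\<forall>m. (\<forall>n. norm (G m n) = 1)
        \<and> (\<forall>i j. i \<noteq> j \<longrightarrow> bdisjoint (G m i) (G m j)) \<and> (\<forall>n. norm (T (G m n)) \<le> 1 / real (Suc m))" ..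
  have G: "\<And>m. (\<forall>n. norm (G m n) = 1)
        \<and> (\<forall>i j. i \<noteq> j \<longrightarrow> bdisjoint (G m i) (G m j)) \<and> (\<forall>n. norm (T (G m n)) \<le> 1 / real (Suc m))" by (rule spec[OF G0])
  define F where "F = limsupF (\<lambda>m. filtermap (G m) sequentially)"
  define f where "f x = (if norm x = 1 then x else G 0 0)" for x
  have fG: "\<And>m n. f (G m n) = G m n" using G unfolding f_def by simp
  have f1: "\<And>i. norm (f i) = 1" using G unfolding f_def by simp
  have Fnb: "F \<noteq> bot"
  proof
    assume "F = bot"
    hence "eventually (\<lambda>x. False) F" by simp
    then obtain M where "eventually (\<lambda>x. False) (filtermap (G M) sequentially)"
      unfolding F_def eventually_limsupF by blast
    thus False by (simp add: eventually_filtermap)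
  qed
  have una: "una_null f F"
    unfolding una_null_def
  proof (intro allI impI)
    fix h :: 'a assume hh: "0 \<le> h \<and> order_continuous_elem h"
    show "((\<lambda>i. norm (inf (babs (f i)) h)) \<longlongrightarrow> 0) F"
    proof (rule tendstoI)
      fix e :: real assume e: "e > 0"
      have "\<forall>m. eventually (\<lambda>n. dist (norm (inf (babs (G m n)) h)) 0 < e) sequentially"
      proof
        fix m
        have "(\<lambda>n. norm (inf (babs (G m n)) h)) \<longlonglongrightarrow> 0"
        proof (rule oc_disjoint_null)
          show "order_continuous_elem h" "0 \<le> h" using hh by simp_all
          show "\<And>n. 0 \<le> inf (babs (G m n)) h" using hh babs_nonneg by simp
          show "\<And>n. inf (babs (G m n)) h \<le> h" by simp
          show "\<And>i j. i \<noteq> j \<Longrightarrow> inf (inf (babs (G m i)) h) (inf (babs (G m j)) h) = 0"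
          proof -
            fix i j :: nat assume ij: "i \<noteq> j"
            have "inf (inf (babs (G m i)) h) (inf (babs (G m j)) h) \<le> inf (babs (G m i)) (babs (G m j))"
              by (meson inf_le1 inf_mono)
            also have "\<dots> = 0" using G[of m] ij unfolding bdisjoint_def by blast
            finally have le: "inf (inf (babs (G m i)) h) (inf (babs (G m j)) h) \<le> 0" .
            have ge: "0 \<le> inf (inf (babs (G m i)) h) (inf (babs (G m j)) h)"
              using hh by (simp add: babs_nonneg)
            show "inf (inf (babs (G m i)) h) (inf (babs (G m j)) h) = 0"
              using le ge by (rule antisym)
          qed
        qed
        thus "eventually (\<lambda>n. dist (norm (inf (babs (G m n)) h)) 0 < e) sequentially"
          using e by (rule tendstoD)
      qed
      hence "\<forall>m\<ge>0. eventually (\<lambda>x. dist (norm (inf (babs (f x)) h)) 0 < e) (filtermap (G m) sequentially)"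
        by (simp add: eventually_filtermap fG)
      thus "eventually (\<lambda>x. dist (norm (inf (babs (f x)) h)) 0 < e) F"
        unfolding F_def eventually_limsupF by blast
    qed
  qed
  have Tlim: "((\<lambda>i. norm (T (f i))) \<longlongrightarrow> 0) F"
  proof (rule tendstoI)
    fix e :: real assume e: "e > 0"
    obtain M :: nat where M: "1 / real (Suc M) < e"
      using e by (metis nat_approx_posE)
    have "\<forall>m\<ge>M. eventually (\<lambda>x. dist (norm (T (f x))) 0 < e) (filtermap (G m) sequentially)"
    proof (intro allI impI)
      fix m assume m: "M \<le> m"
      have "\<And>n. norm (T (G m n)) < e"
      proof -
        fix n
        have "1 / real (Suc m) \<le> 1 / real (Suc M)" using m by (simp add: frac_le)
        thus "norm (T (G m n)) < e" using G[of m] M by (meson le_less_trans order_trans)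
      qed
      thus "eventually (\<lambda>x. dist (norm (T (f x))) 0 < e) (filtermap (G m) sequentially)"
        by (simp add: eventually_filtermap fG)
    qed
    thus "eventually (\<lambda>x. dist (norm (T (f x))) 0 < e) F"
      unfolding F_def eventually_limsupF by blast
  qed
  show False using sd Fnb f1 una Tlim unfolding strongly_DNS_def by blast
qed




lemma cone_suminf:
  fixes g :: "nat \<Rightarrow> 'a::banach_lattice"
  assumes s: "summable g" and p: "\<And>n. 0 \<le> g n" shows "0 \<le> suminf g"
proof (rule closed_cone[OF summable_LIMSEQ[OF s]])
  fix n show "0 \<le> (\<Sum>i<n. g i)" using p by (simp add: sum_nonneg)
qed

lemma suminf_ge_term:
  fixes g :: "nat \<Rightarrow> 'a::banach_lattice"
  assumes s: "summable g" and p: "\<And>n. 0 \<le> g n" shows "g k \<le> suminf g"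
proof -
  define h where "h n = (if n = k then g n else 0)" for n
  have hs: "h sums g k" unfolding h_def by (rule sums_single)
  have s2: "summable (\<lambda>n. g n - h n)" using s hs by (intro summable_diff) (auto simp: sums_summable)
  have e1: "suminf g - suminf h = (\<Sum>n. g n - h n)" using s hs by (intro suminf_diff) (auto simp: sums_summable)
  have e2: "suminf h = g k" using hs by (rule sums_unique[symmetric])
  have ge: "0 \<le> (\<Sum>n. g n - h n)"
    by (rule cone_suminf[OF s2]) (simp add: h_def p)
  have "0 \<le> suminf g - g k" using ge by (simp only: e1[unfolded e2])
  thus ?thesis by (simp only: diff_ge_0_iff_ge)
qed

lemma babs_diff_le: "0 \<le> p \<Longrightarrow> 0 \<le> q \<Longrightarrow> babs (p - q) \<le> p + (q::'a::banach_lattice)"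
proof -
  assume p: "0 \<le> p" and q: "0 \<le> q"
  have mq: "- q \<le> q" by (rule order_trans[of _ 0]) (use q in simp_all)
  have mp: "- p \<le> p" by (rule order_trans[of _ 0]) (use p in simp_all)
  have 1: "p - q \<le> p + q" unfolding diff_conv_add_uminus by (rule add_left_mono[OF mq])
  have "q + - p \<le> q + p" by (rule add_left_mono[OF mp])
  hence 2: "q - p \<le> p + q" by (simp only: diff_conv_add_uminus add.commute[of q p])
  hence 2: "- (p - q) \<le> p + q" by (simp only: minus_diff_eq)
  show ?thesis unfolding babs_def by (rule sup_least[OF 1 2])
qed

lemma pos_le_babs: "sup y 0 \<le> babs (y::'a::banach_lattice)" "sup (-y) 0 \<le> babs y"
  using babs_nonneg[of y] unfolding babs_def by (auto intro: sup_least)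

primrec Useq :: "('a::banach_lattice \<Rightarrow> nat \<Rightarrow> 'a) \<Rightarrow> nat \<Rightarrow> 'a" where
  "Useq g 0 = 0"
| "Useq g (Suc k) = Useq g k + babs (g (Useq g k) k)"




lemma part1:
  fixes T :: "'a::banach_lattice \<Rightarrow> 'b::real_normed_vector"
  assumes bl: "bounded_linear T" and dns: "DNS T" shows "weakly_DNS T"
proof (rule ccontr)
  assume "\<not> weakly_DNS T"
  then obtain f :: "'a \<Rightarrow> 'a" and D where Dnb: "D \<noteq> bot" and f1: "\<forall>i. norm (f i) = 1"
    and un: "un_null f D" and Tl: "((\<lambda>i. norm (T (f i))) \<longlongrightarrow> 0) D"
    unfolding weakly_DNS_def by blast
  obtain K where K: "K > 0" "\<And>x. norm (T x) \<le> norm x * K"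
    using bounded_linear.pos_bounded[OF bl] by blast
  define Q where "Q u k y \<longleftrightarrow> (\<exists>i. y = f i) \<and> norm (T y) < (1/2)^k
       \<and> norm (inf (babs y) ((4^k) *\<^sub>R u)) < (1/2)^k" for u :: 'a and k :: nat and y
  have pick: "\<exists>y. Q u k y" if u0: "0 \<le> u" for u k
  proof -
    have ek: "(0::real) < (1/2)^k" by simp
    have e1: "eventually (\<lambda>i. norm (T (f i)) < (1/2)^k) D"
      using tendstoD[OF Tl ek] by simp
    have "0 \<le> (4::real)^k *\<^sub>R u" by (rule scaleR_nonneg_nonneg) (simp_all add: u0)
    hence L2: "((\<lambda>i. norm (inf (babs (f i)) ((4^k) *\<^sub>R u))) \<longlongrightarrow> 0) D"
      using un unfolding un_null_def by blast
    have e2: "eventually (\<lambda>i. norm (inf (babs (f i)) ((4^k) *\<^sub>R u)) < (1/2)^k) D"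
      using tendstoD[OF L2 ek] by simp
    have "eventually (\<lambda>i. Q u k (f i)) D"
      by (rule eventually_mono[OF eventually_conj[OF e1 e2]]) (auto simp: Q_def)
    then obtain i where "Q u k (f i)" using eventually_happens[of _ D] Dnb by blast
    thus ?thesis by blast
  qed
  define nxt where "nxt u k = (SOME y. Q u k y)" for u k
  define U where "U = Useq nxt"
  define y where "y k = nxt (U k) k" for k
  define a where "a k = babs (y k)" for k
  have U0: "0 \<le> U k" for k
  proof (induction k)
    case 0 thus ?case by (simp add: U_def)
  next
    case (Suc k) thus ?case by (simp add: U_def babs_nonneg add_nonneg_nonneg del: Useq.simps(1))
  qed
  have Qy: "Q (U k) k (y k)" for k
    unfolding y_def nxt_def by (rule someI_ex[OF pick[OF U0]])
  have ny: "norm (y k) = 1" for k using Qy[of k] f1 unfolding Q_def by auto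
  have Ty: "norm (T (y k)) < (1/2)^k" for k using Qy[of k] unfolding Q_def by auto
  have ay: "norm (inf (a k) ((4^k) *\<^sub>R U k)) < (1/2)^k" for k using Qy[of k] unfolding Q_def a_def by auto
  have a0: "0 \<le> a k" for k unfolding a_def by (rule babs_nonneg)
  have na: "norm (a k) = 1" for k unfolding a_def norm_babs by (rule ny)
  have USuc: "U (Suc k) = U k + a k" for k unfolding U_def a_def y_def by simp
  have aU: "a i \<le> U j" if "i < j" for i j
    using that
  proof (induction j)
    case 0 thus ?case by simp
  next
    case (Suc j)
    show ?case
    proof (cases "i = j")
      case True
      have "a i \<le> U j + a i" by (rule add_increasing[OF U0 order_refl])
      thus ?thesis using True USuc by simp
    next
      case False
      have "i < j" using Suc.prems False by simp
      hence "a i \<le> U j" by (rule Suc.IH)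
      also have "U j \<le> U j + a j" by (rule add_increasing2[OF a0 order_refl])
      finally show ?thesis using USuc by simp
    qed
  qed
  define g where "g i j = ((1/2::real)^(j + Suc i)) *\<^sub>R a (j + Suc i)" for i j
  have gn: "norm (g i j) = (1/2)^(j + Suc i)" for i j unfolding g_def using na by simp
  have sumr: "summable (\<lambda>j. (1/2::real)^(j + Suc i))" for i
    using summable_ignore_initial_segment[OF summable_geometric[of "1/2::real"], of "Suc i"] by simp
  have sumg: "summable (g i)" for i
    by (rule summable_norm_cancel) (simp only: gn sumr)
  have g0: "0 \<le> g i j" for i j unfolding g_def by (rule scaleR_nonneg_nonneg[OF _ a0]) simp
  define W where "W i = suminf (g i)" for i
  have W0: "0 \<le> W i" for i unfolding W_def by (rule cone_suminf[OF sumg g0])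
  have sumr_val: "(\<Sum>j. (1/2::real)^(j + Suc i)) = (1/2)^i" for i
  proof -
    have g2: "(\<Sum>j. (1/2::real)^j) = 2" using suminf_geometric[of "1/2::real"] by simp
    have "(\<Sum>j. (1/2::real)^(j + Suc i)) = (\<Sum>j. (1/2::real)^j * (1/2)^(Suc i))"
      by (simp only: power_add)
    also have "\<dots> = (\<Sum>j. (1/2::real)^j) * (1/2)^(Suc i)"
      by (rule suminf_mult2[symmetric]) (rule summable_geometric, simp)
    finally show ?thesis by (simp add: g2)
  qed
  have nW: "norm (W i) \<le> (1/2)^i" for i
  proof -
    have "norm (W i) \<le> (\<Sum>j. (1/2::real)^(j + Suc i))"
      unfolding W_def by (rule norm_suminf_le) (simp_all add: gn sumr)
    thus ?thesis using sumr_val by simp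
  qed
  have Wge: "((1/2::real)^j) *\<^sub>R a j \<le> W i" if "i < j" for i j
  proof -
    have "g i (j - Suc i) \<le> W i" unfolding W_def by (rule suminf_ge_term[OF sumg g0])
    moreover have "j - Suc i + Suc i = j" using that by simp
    ultimately show ?thesis unfolding g_def by simp
  qed
  define s where "s i = ((4::real)^i) *\<^sub>R U i + W i" for i
  have s0: "0 \<le> s i" for i unfolding s_def
    by (rule add_nonneg_nonneg[OF scaleR_nonneg_nonneg[OF _ U0] W0]) simp
  define dp where "dp i = sup (sup (y i) 0 - s i) 0" for i
  define dn where "dn i = sup (sup (- y i) 0 - s i) 0" for i
  define d where "d i = dp i - dn i" for i
  define P where "P i = sup (a i - s i) 0" for i
  have P0: "0 \<le> P i" for i unfolding P_def by simp
  have dpP: "dp i \<le> P i" for i unfolding dp_def P_def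
    by (rule sup_mono[OF diff_right_mono order_refl]) (unfold a_def, rule pos_le_babs)
  have dnP: "dn i \<le> P i" for i unfolding dn_def P_def
    by (rule sup_mono[OF diff_right_mono order_refl]) (unfold a_def, rule pos_le_babs)
  have dP: "babs (d i) \<le> 2 *\<^sub>R P i" for i
  proof -
    have "babs (d i) \<le> dp i + dn i" unfolding d_def
      by (rule babs_diff_le) (simp_all add: dp_def dn_def)
    also have "\<dots> \<le> P i + P i" by (rule add_mono[OF dpP dnP])
    finally show ?thesis by (simp add: scaleR_2)
  qed
  have disj_lt: "inf (babs (d i)) (babs (d j)) = 0" if ij: "i < j" for i j
  proof -
    define p where "p = a i"
    define q where "q = ((1/2::real)^j) *\<^sub>R a j"
    define A where "A = sup (p - q) 0"
    define B where "B = sup (- (p - q)) 0"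
    have AB: "inf A B = 0" unfolding A_def B_def by (rule pos_neg_disj)
    have A0: "0 \<le> A" unfolding A_def by simp
    have B0: "0 \<le> B" unfolding B_def by simp
    have PiA: "P i \<le> A"
    proof -
      have "q \<le> s i" unfolding q_def s_def
        by (rule add_increasing[OF scaleR_nonneg_nonneg[OF _ U0] Wge[OF ij]]) simp
      hence "a i - s i \<le> p - q" unfolding p_def by (rule diff_left_mono)
      thus ?thesis unfolding P_def A_def by (rule sup_mono[OF _ order_refl])
    qed
    have PjB: "P j \<le> (2^j) *\<^sub>R B"
    proof -
      have "((2::real)^j) *\<^sub>R a i \<le> ((4::real)^j) *\<^sub>R a i"
        by (rule scaleR_right_mono[OF _ a0]) (rule power_mono; simp)
      also have "\<dots> \<le> ((4::real)^j) *\<^sub>R U j"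
        by (rule scaleR_left_mono[OF aU[OF ij]]) simp
      also have "\<dots> \<le> s j" unfolding s_def using W0[of j] by simp
      finally have "a j - s j \<le> a j - ((2::real)^j) *\<^sub>R a i" by (rule diff_left_mono)
      also have "a j - ((2::real)^j) *\<^sub>R a i = ((2::real)^j) *\<^sub>R (- (p - q))"
      proof -
        have hh: "(2::real)^j * (1/2)^j = 1"
        proof -
          have "(2::real)^j * (1/2)^j = (2 * (1/2))^j" by (rule power_mult_distrib[symmetric])
          thus ?thesis by simp
        qed
        show ?thesis unfolding p_def q_def
          by (simp add: scaleR_right_diff_distrib minus_diff_eq hh)
      qed
      finally have "a j - s j \<le> ((2::real)^j) *\<^sub>R (- (p - q))" .
      hence "P j \<le> sup (((2::real)^j) *\<^sub>R (- (p - q))) 0" unfolding P_def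
        by (rule sup_mono[OF _ order_refl])
      also have "\<dots> = ((2::real)^j) *\<^sub>R B"
      proof -
        have hs: "(2::real)^j *\<^sub>R sup (-(p-q)) 0 = sup ((2::real)^j *\<^sub>R (-(p-q))) ((2::real)^j *\<^sub>R 0)"
          by (rule scaleR_sup) simp
        show ?thesis unfolding B_def by (simp only: hs scaleR_zero_right)
      qed
      finally show ?thesis .
    qed
    define C where "C = 2 * (2::real)^j"
    have C0: "0 < C" unfolding C_def by simp
    have x1: "babs (d i) \<le> C *\<^sub>R A"
    proof -
      have "babs (d i) \<le> 2 *\<^sub>R P i" by (rule dP)
      also have "\<dots> \<le> 2 *\<^sub>R A" by (rule scaleR_left_mono[OF PiA]) simp
      also have "\<dots> \<le> C *\<^sub>R A" unfolding C_def by (rule scaleR_right_mono[OF _ A0]) simp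
      finally show ?thesis .
    qed
    have x2: "babs (d j) \<le> C *\<^sub>R B"
    proof -
      have "babs (d j) \<le> 2 *\<^sub>R P j" by (rule dP)
      also have "\<dots> \<le> 2 *\<^sub>R ((2^j) *\<^sub>R B)" by (rule scaleR_left_mono[OF PjB]) simp
      also have "\<dots> = C *\<^sub>R B" unfolding C_def by simp
      finally show ?thesis .
    qed
    show ?thesis by (rule disj_scale[OF babs_nonneg babs_nonneg C0 x1 x2 AB])
  qed
  have disj: "inf (babs (d i)) (babs (d j)) = 0" if ij: "i \<noteq> j" for i j
  proof (cases "i < j")
    case True thus ?thesis by (rule disj_lt)
  next
    case False
    hence ji: "j < i" using ij by simp
    show ?thesis by (subst inf_commute) (rule disj_lt[OF ji])
  qed
  have close: "norm (y i - d i) \<le> 4 * (1/2)^i" for i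
  proof -
    have ainf: "norm (inf (a i) (s i)) \<le> 2 * (1/2)^i"
    proof -
      have "inf (a i) (s i) \<le> inf (a i) (((4::real)^i) *\<^sub>R U i) + W i"
        unfolding s_def by (rule inf_add_le[OF W0])
      moreover have "0 \<le> inf (a i) (s i)" using a0[of i] s0[of i] by simp
      ultimately have "norm (inf (a i) (s i)) \<le> norm (inf (a i) (((4::real)^i) *\<^sub>R U i) + W i)"
        by (rule norm_mono_pos[rotated])
      also have "\<dots> \<le> norm (inf (a i) (((4::real)^i) *\<^sub>R U i)) + norm (W i)"
        by (rule norm_triangle_ineq)
      also have "\<dots> \<le> 2 * (1/2)^i" using ay[of i] nW[of i] by linarith
      finally show ?thesis .
    qed
    have b1: "norm (inf (s i) (sup (y i) 0)) \<le> norm (inf (a i) (s i))"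
    proof (rule norm_mono_pos)
      show "0 \<le> inf (s i) (sup (y i) 0)" using s0[of i] by simp
      have "inf (s i) (sup (y i) 0) \<le> inf (s i) (a i)"
        by (rule inf_mono[OF order_refl]) (unfold a_def, rule pos_le_babs)
      thus "inf (s i) (sup (y i) 0) \<le> inf (a i) (s i)" by (simp add: inf_commute)
    qed
    have b2: "norm (inf (s i) (sup (- y i) 0)) \<le> norm (inf (a i) (s i))"
    proof (rule norm_mono_pos)
      show "0 \<le> inf (s i) (sup (- y i) 0)" using s0[of i] by simp
      have "inf (s i) (sup (- y i) 0) \<le> inf (s i) (a i)"
        by (rule inf_mono[OF order_refl]) (unfold a_def, rule pos_le_babs)
      thus "inf (s i) (sup (- y i) 0) \<le> inf (a i) (s i)" by (simp add: inf_commute)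
    qed
    have e: "y i - d i = inf (s i) (sup (y i) 0) - inf (s i) (sup (- y i) 0)"
    proof -
      have "y i - d i = (sup (y i) 0 - sup (- y i) 0) - (dp i - dn i)"
        unfolding d_def by (simp only: pos_minus_neg)
      also have "\<dots> = (sup (y i) 0 - dp i) - (sup (- y i) 0 - dn i)" by (simp add: algebra_simps)
      also have "\<dots> = inf (s i) (sup (y i) 0) - inf (s i) (sup (- y i) 0)"
        unfolding dp_def dn_def by (simp only: diff_pprt)
      finally show ?thesis .
    qed
    have "norm (y i - d i) \<le> norm (inf (s i) (sup (y i) 0)) + norm (inf (s i) (sup (- y i) 0))"
      unfolding e by (rule norm_triangle_ineq4)
    also have "\<dots> \<le> 4 * (1/2)^i" using b1 b2 ainf by linarith
    finally show ?thesis .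
  qed
  have nd: "1/2 \<le> norm (d (n + 3))" for n
  proof -
    have "(1/2::real)^(n+3) \<le> (1/2)^3" by (rule power_decreasing) simp_all
    moreover have "(1/2::real)^3 = 1/8" by (simp add: power_divide)
    ultimately have "4 * (1/2::real)^(n+3) \<le> 1/2" by linarith
    hence "norm (y (n+3) - d (n+3)) \<le> 1/2" using close[of "n+3"] by simp
    moreover have "norm (y (n+3)) \<le> norm (d (n+3)) + norm (y (n+3) - d (n+3))"
      by (rule norm_triangle_sub)
    ultimately show ?thesis using ny[of "n+3"] by linarith
  qed
  have Td: "norm (T (d i)) \<le> (1 + 4 * K) * (1/2)^i" for i
  proof -
    have "T (d i) = T (y i) - T (y i - d i)" using linear_diff[OF bounded_linear.linear[OF bl]] by simp
    hence "norm (T (d i)) \<le> norm (T (y i)) + norm (T (y i - d i))"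
      by (simp add: norm_triangle_ineq4)
    also have "\<dots> \<le> (1/2)^i + norm (y i - d i) * K" using Ty[of i] K(2)[of "y i - d i"] by linarith
    also have "\<dots> \<le> (1/2)^i + (4 * (1/2)^i) * K"
      using close[of i] K(1) by (simp add: mult_right_mono)
    finally show ?thesis by (simp add: algebra_simps)
  qed
  define G where "G n = (1 / norm (d (n + 3))) *\<^sub>R d (n + 3)" for n
  have ndp: "0 < norm (d (n + 3))" for n using nd[of n] by linarith
  have cpos: "0 < 1 / norm (d (n + 3))" for n using ndp[of n] by simp
  have G1: "norm (G n) = 1" for n unfolding G_def using ndp[of n] by simp
  have Gdisj: "bdisjoint (G m) (G n)" if mn: "m \<noteq> n" for m n
  proof -
    define cm where "cm = 1 / norm (d (m + 3))"
    define cn where "cn = 1 / norm (d (n + 3))"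
    define c where "c = max cm cn"
    have cm0: "0 < cm" unfolding cm_def by (rule cpos)
    have cn0: "0 < cn" unfolding cn_def by (rule cpos)
    have c0: "0 < c" unfolding c_def using cm0 by simp
    have bm: "babs (G m) = cm *\<^sub>R babs (d (m+3))" unfolding G_def cm_def by (rule babs_scaleR[OF cpos])
    have bn: "babs (G n) = cn *\<^sub>R babs (d (n+3))" unfolding G_def cn_def by (rule babs_scaleR[OF cpos])
    have x1: "cm *\<^sub>R babs (d (m+3)) \<le> c *\<^sub>R babs (d (m+3))"
      by (rule scaleR_right_mono[OF _ babs_nonneg]) (simp add: c_def)
    have x2: "cn *\<^sub>R babs (d (n+3)) \<le> c *\<^sub>R babs (d (n+3))"
      by (rule scaleR_right_mono[OF _ babs_nonneg]) (simp add: c_def)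
    have p1: "0 \<le> cm *\<^sub>R babs (d (m+3))" by (rule scaleR_nonneg_nonneg[OF _ babs_nonneg]) (use cm0 in simp)
    have p2: "0 \<le> cn *\<^sub>R babs (d (n+3))" by (rule scaleR_nonneg_nonneg[OF _ babs_nonneg]) (use cn0 in simp)
    have "inf (babs (d (m+3))) (babs (d (n+3))) = 0" using mn by (intro disj) simp
    hence "inf (cm *\<^sub>R babs (d (m+3))) (cn *\<^sub>R babs (d (n+3))) = 0"
      by (rule disj_scale[OF p1 p2 c0 x1 x2])
    thus ?thesis unfolding bdisjoint_def bm bn .
  qed
  have GT: "(\<lambda>n. norm (T (G n))) \<longlonglongrightarrow> 0"
  proof (rule Lim_null_comparison)
    show "\<forall>\<^sub>F n in sequentially. norm (norm (T (G n))) \<le> (2 * (1 + 4 * K)) * (1/2)^n"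
    proof (rule always_eventually, rule allI)
      fix n
      have "norm (T (G n)) = (1 / norm (d (n + 3))) * norm (T (d (n+3)))"
        unfolding G_def using linear_scale[OF bounded_linear.linear[OF bl]] ndp[of n] by simp
      also have "\<dots> \<le> 2 * norm (T (d (n+3)))"
      proof -
        have "1 / norm (d (n + 3)) \<le> 2" using nd[of n] by (simp add: divide_le_eq)
        thus ?thesis by (rule mult_right_mono) simp
      qed
      also have "\<dots> \<le> 2 * ((1 + 4 * K) * (1/2)^(n+3))" using Td[of "n+3"] by simp
      also have "\<dots> \<le> 2 * ((1 + 4 * K) * (1/2)^n)"
        using K(1) by (intro mult_left_mono power_decreasing) (simp_all add: less_imp_le)
      also have "\<dots> = (2 * (1 + 4 * K)) * (1/2)^n" by (rule mult.assoc[symmetric])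
      finally show "norm (norm (T (G n))) \<le> (2 * (1 + 4 * K)) * (1/2)^n" by simp
    qed
    show "(\<lambda>n. (2 * (1 + 4 * K)) * (1/2::real)^n) \<longlonglongrightarrow> 0"
      by (rule tendsto_mult_right_zero, rule LIMSEQ_realpow_zero) simp_all
  qed
  show False using dns G1 Gdisj GT unfolding DNS_def by blast
qed


theorem proposition5p6:
  fixes T :: "'a::banach_lattice \<Rightarrow> 'b::banach"
  assumes "bounded_linear T"
  shows "(DNS T \<longrightarrow> weakly_DNS T) \<and> (strongly_DNS T \<longrightarrow> strictly_DNS T)"
proof (intro conjI impI)
  assume "DNS T" thus "weakly_DNS T" by (rule part1[OF assms])
next
  assume "strongly_DNS T" thus "strictly_DNS T" by (rule part2)
qed

end
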